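(* For a prime $p\ge 5$ the following statements are equivalent: (i) $p$ is a Wolstenholme prime, i.e. $\binom{2p}{p}\equiv 2\pmod{p^4}$; (ii) for all nonnegative integers $n$ and $m$, $\binom{np}{mp}\equiv\binom{n}{m}\pmod{p^4}$; (iii) for all nonnegative integers $n,m,n_0,m_0$ with $n_0<p$ and $m_0<p$, $$\binom{np^4+n_0}{mp^4+m_0}\equiv\binom{n}{m}\binom{n_0}{m_0}\pmod{p^4}.$$
   Context: A prime $p$ is called a Wolstenholme prime if $\binom{2p-1}{p-1}\equiv 1\pmod{p^4}$, equivalently $\binom{2p}{p}\equiv 2\pmod{p^4}$. Binomial coefficients use the conventions $\binom{0}{0}=1$ and $\binom{l}{r}=0$ if $l<r$. *)

theory Defs
  imports "HOL-Number_Theory.Number_Theory"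
begin

end

theory Submission
  imports Defs
begin



definition SS :: "nat \<Rightarrow> int \<Rightarrow> int" where
  "SS p t = (\<Prod>j\<in>{1..p-1}. int j + int p * t)"

definition TT :: "nat \<Rightarrow> nat \<Rightarrow> int" where
  "TT p n = (\<Prod>k<n. SS p (int k))"

lemma fact_add_int: "(fact (a + b) :: int) = fact a * (\<Prod>j\<in>{1..b}. int (a + j))"
proof (induction b)
  case 0 then show ?case by simp
next
  case (Suc b)
  have "(fact (a + Suc b) :: int) = fact (a+b) * int (a + Suc b)"
    by (simp add: fact_Suc algebra_simps)
  also have "\<dots> = fact a * (\<Prod>j\<in>{1..Suc b}. int (a + j))"
    using Suc by (simp add: prod.cl_ivl_Suc)
  finally show ?case .
qed

lemma fact_TT:
  assumes "p \<ge> 1"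
  shows "(fact (n * p) :: int) = int p ^ n * fact n * TT p n"
proof (induction n)
  case 0 then show ?case by (simp add: TT_def)
next
  case (Suc n)
  obtain q where q: "p = Suc q" using assms by (cases p) auto
  have "(fact (Suc n * p) :: int) = fact (n*p) * (\<Prod>j\<in>{1..p}. int (n*p + j))"
    using fact_add_int[of "n*p" p] by (simp add: add.commute)
  also have "(\<Prod>j\<in>{1..p}. int (n*p + j)) = SS p (int n) * int (n*p+p)"
    unfolding q SS_def by (simp add: prod.cl_ivl_Suc algebra_simps)
  also have "int (n*p+p) = int p * int (Suc n)" by (simp add: algebra_simps)
  finally have "(fact (Suc n * p) :: int) = fact (n*p) * (SS p (int n) * (int p * int (Suc n)))" .
  then show ?case using Suc
    by (simp add: TT_def fact_Suc algebra_simps)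
qed

lemma binom_TT:
  assumes "p \<ge> 1" "m \<le> n"
  shows "int ((n*p) choose (m*p)) * TT p m * TT p (n-m) = int (n choose m) * TT p n"
proof -
  have mp: "m*p \<le> n*p" using assms by simp
  have "fact (m*p) * fact (n*p - m*p) * ((n*p) choose (m*p)) = (fact (n*p) :: nat)"
    using binomial_fact_lemma[OF mp] .
  hence e1: "fact (m*p) * fact ((n-m)*p) * int ((n*p) choose (m*p)) = (fact (n*p) :: int)"
    by (metis diff_mult_distrib of_nat_fact of_nat_mult)
  have "fact m * fact (n - m) * (n choose m) = (fact n :: nat)"
    using binomial_fact_lemma[OF assms(2)] .
  hence e2: "fact m * fact (n-m) * int (n choose m) = (fact n :: int)"
    by (metis of_nat_fact of_nat_mult)
  have pw: "int p ^ n = int p ^ m * int p ^ (n-m)"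
    using assms(2) by (simp add: power_add[symmetric])
  define B where "B = int ((n*p) choose (m*p))"
  define C where "C = int (n choose m)"
  have e1': "(int p ^ m * fact m * TT p m) * (int p ^ (n-m) * fact (n-m) * TT p (n-m)) * B
     = int p ^ n * fact n * TT p n"
    using e1 unfolding fact_TT[OF assms(1)] B_def .
  have "(int p ^ n * fact n) * (B * TT p m * TT p (n-m))
      = (int p ^ m * int p ^ (n-m)) * (fact m * fact (n-m) * C) * B * TT p m * TT p (n-m)"
    unfolding e2 C_def pw by (simp add: algebra_simps)
  also have "\<dots> = C * ((int p ^ m * fact m * TT p m) * (int p ^ (n-m) * fact (n-m) * TT p (n-m)) * B)"
    by (simp add: algebra_simps)
  also have "\<dots> = (int p ^ n * fact n) * (C * TT p n)"
    unfolding e1' by (simp add: algebra_simps)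
  finally have "(int p ^ n * fact n) * (B * TT p m * TT p (n-m))
      = (int p ^ n * fact n) * (C * TT p n)" .
  moreover have "int p ^ n * fact n \<noteq> (0::int)" using assms(1) by simp
  ultimately show ?thesis unfolding B_def C_def using assms(1) by auto
qed


lemma dvd3: "(P::int)^2 dvd c \<Longrightarrow> P^3 dvd P*c"
  by (auto elim!: dvdE simp: power2_eq_square power3_eq_cube)

lemma dvd4: "(P::int)^3 dvd c \<Longrightarrow> P^4 dvd P*c"
  by (auto elim!: dvdE simp: power4_eq_xxxx power3_eq_cube)

lemma expand3:
  fixes P :: int and x :: "nat \<Rightarrow> int"
  assumes "finite J"
  shows "\<exists>c1 c2 c3. P dvd c1 \<and> P^2 dvd c2 \<and> P^3 dvd c3 \<and>
     (\<forall>t. [(\<Prod>j\<in>J. x j + P*t) = (\<Prod>j\<in>J. x j) + c1*t + c2*t^2 + c3*t^3] (mod P^4))"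
  using assms
proof (induction J rule: finite_induct)
  case empty
  show ?case by (rule exI[of _ 0], rule exI[of _ 0], rule exI[of _ 0]) simp
next
  case (insert a J)
  then obtain c1 c2 c3 where c: "P dvd c1" "P^2 dvd c2" "P^3 dvd c3"
    "\<And>t. [(\<Prod>j\<in>J. x j + P*t) = (\<Prod>j\<in>J. x j) + c1*t + c2*t^2 + c3*t^3] (mod P^4)"
    by blast
  define c0 where "c0 = (\<Prod>j\<in>J. x j)"
  show ?case
  proof (intro exI conjI allI)
    show "P dvd x a * c1 + P * c0" using c(1) by simp
    show "P^2 dvd x a * c2 + P * c1" using c(1,2)
      by (simp add: power2_eq_square mult_dvd_mono)
    show "P^3 dvd x a * c3 + P * c2" by (rule dvd_add[OF dvd_mult[OF c(3)] dvd3[OF c(2)]])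
    fix t
    have h1: "[(\<Prod>j\<in>insert a J. x j + P*t) = (x a + P*t) * (c0 + c1*t + c2*t^2 + c3*t^3)] (mod P^4)"
      using insert(1,2) c(4)[of t] unfolding c0_def by (simp add: cong_mult)
    have h2: "(x a + P*t) * (c0 + c1*t + c2*t^2 + c3*t^3)
       = (x a * c0 + (x a * c1 + P * c0)*t + (x a * c2 + P * c1)*t^2 + (x a * c3 + P * c2)*t^3) + (P*c3)*t^4"
      by (simp add: algebra_simps power2_eq_square power3_eq_cube power4_eq_xxxx)
    have "P^4 dvd (P*c3)*t^4" using dvd4[OF c(3)] by (rule dvd_mult2)
    hence h3: "[(x a * c0 + (x a * c1 + P * c0)*t + (x a * c2 + P * c1)*t^2 + (x a * c3 + P * c2)*t^3) + (P*c3)*t^4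
       = (x a * c0 + (x a * c1 + P * c0)*t + (x a * c2 + P * c1)*t^2 + (x a * c3 + P * c2)*t^3)] (mod P^4)"
      by (simp add: cong_iff_dvd_diff)
    have h4: "(\<Prod>j\<in>insert a J. x j) = x a * c0" using insert(1,2) unfolding c0_def by simp
    show "[(\<Prod>j\<in>insert a J. x j + P*t) = (\<Prod>j\<in>insert a J. x j) + (x a * c1 + P * c0)*t
        + (x a * c2 + P * c1)*t^2 + (x a * c3 + P * c2)*t^3] (mod P^4)"
      unfolding h4 by (rule cong_trans[OF h1[unfolded h2] h3])
  qed
qed

lemma SS_sym:
  assumes "odd p"
  shows "SS p (-1-t) = SS p t"
proof -
  have "SS p (-1-t) = (\<Prod>j\<in>{1..p-1}. (-1) * (int (p-j) + int p * t))"
    unfolding SS_def by (rule prod.cong) (auto simp: algebra_simps of_nat_diff)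
  also have "\<dots> = (-1)^(p-1) * (\<Prod>j\<in>{1..p-1}. int (p-j) + int p * t)"
    unfolding prod.distrib by simp
  also have "(\<Prod>j\<in>{1..p-1}. int (p-j) + int p * t) = SS p t"
    unfolding SS_def
    by (rule prod.reindex_bij_witness[of _ "\<lambda>j. p - j" "\<lambda>j. p - j"]) auto
  also have "(-1::int)^(p-1) = 1" using assms by simp
  finally show ?thesis by simp
qed

lemma cop_cancel:
  fixes c x m :: int
  assumes "coprime c m" "m dvd c * x" shows "m dvd x"
  using assms by (metis coprime_commute coprime_dvd_mult_right_iff)

lemma cop_pow:
  assumes "prime p" "\<not> p dvd c" shows "coprime (int c) (int p ^ k)"
  using assms by (metis coprime_int_iff of_nat_power prime_imp_power_coprime_nat)

lemma not_dvd_small: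
  fixes p :: nat
  assumes "prime p" "p \<ge> 5" shows "\<not> p dvd 2" "\<not> p dvd 3"
  using assms by (auto dest: dvd_imp_le)

lemma not_dvd_23:
  fixes p :: nat
  assumes "prime p" "p \<ge> 5" "(c::nat) = 2^i * 3^j" shows "\<not> p dvd c"
proof
  assume "p dvd c"
  hence "p dvd 2^i \<or> p dvd 3^j" using assms(1,3) by (simp add: prime_dvd_mult_iff)
  hence "p dvd 2 \<or> p dvd 3" using assms(1) prime_dvd_power by blast
  thus False using not_dvd_small[OF assms(1,2)] by blast
qed

lemma W_coprime:
  assumes "prime p" shows "coprime (SS p 0) (int p ^ k)"
proof -
  have "SS p 0 = fact (p-1)"
    unfolding SS_def by (simp add: fact_prod)
  hence "SS p 0 = int (fact (p-1))" by (simp add: of_nat_fact)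
  moreover have "\<not> p dvd fact (p-1)"
    using assms prime_dvd_fact_iff[OF assms] prime_gt_0_nat[OF assms] by auto
  ultimately show ?thesis using cop_pow[OF assms, of "fact (p-1)" k] by simp
qed

lemma key_S:
  assumes "prime p" "p \<ge> 5"
  shows "\<exists>a. (int p)^2 dvd a \<and> (\<forall>t. [SS p t = SS p 0 + a*t*(t+1)] (mod (int p)^4))"
proof -
  define P where "P = int p"
  obtain c1 c2 c3 where c: "P dvd c1" "P^2 dvd c2" "P^3 dvd c3"
     "\<And>t. [(\<Prod>j\<in>{1..p-1}. int j + P*t) = (\<Prod>j\<in>{1..p-1}. int j) + c1*t + c2*t^2 + c3*t^3] (mod P^4)"
    using expand3[of "{1..p-1}" P int] by auto
  have W: "(\<Prod>j\<in>{1..p-1}. int j) = SS p 0" unfolding SS_def by simp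
  have cS: "[SS p t = SS p 0 + c1*t + c2*t^2 + c3*t^3] (mod P^4)" for t
    using c(4)[of t] unfolding W unfolding SS_def P_def .
  have odd: "odd p" using assms prime_odd_nat by fastforce
  have s0: "SS p (-1) = SS p 0" using SS_sym[OF odd, of 0] by simp
  have s1: "SS p (-2) = SS p 1" using SS_sym[OF odd, of 1] by simp
  have "P^4 dvd c1 + (c3 - c2)"
    using cS[of "-1"] cS[of 0] unfolding s0 by (simp add: cong_iff_dvd_diff power2_eq_square power3_eq_cube)
  hence "P^4 dvd - (c1 + (c3 - c2))" by (simp only: dvd_minus_iff)
  hence d1: "P^4 dvd (- c1 + c2 - c3)" by (simp add: algebra_simps)
  have d2: "P^4 dvd (-3*c1 + 3*c2 - 9*c3)"
  proof -
    have "P^4 dvd (SS p 0 + c1*(-2) + c2*(-2)^2 + c3*(-2)^3) - (SS p 0 + c1*1 + c2*1^2 + c3*1^3)"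
    proof -
      have h1: "[SS p 1 = SS p 0 + c1*(-2) + c2*(-2)^2 + c3*(-2)^3] (mod P^4)" using cS[of "-2"] unfolding s1 .
      have "[SS p 0 + c1*(-2) + c2*(-2)^2 + c3*(-2)^3 = SS p 0 + c1*1 + c2*1^2 + c3*1^3] (mod P^4)"
        using cong_trans[OF cong_sym[OF h1] cS[of 1]] by simp
      thus ?thesis unfolding cong_iff_dvd_diff .
    qed
    thus ?thesis by (simp add: algebra_simps)
  qed
  have "P^4 dvd 3*(- c1 + c2 - c3) - (-3*c1 + 3*c2 - 9*c3)" by (rule dvd_diff[OF dvd_mult[OF d1] d2])
  moreover have "3*(- c1 + c2 - c3) - (-3*c1 + 3*c2 - 9*c3) = 6 * c3" by simp
  ultimately have "P^4 dvd 6 * c3" by simp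
  moreover have "coprime (6::int) (P^4)"
  proof -
    have "coprime (int 6) (int p ^ 4)"
      by (rule cop_pow[OF assms(1)], rule not_dvd_23[OF assms, of _ 1 1]) simp
    thus ?thesis unfolding P_def by simp
  qed
  ultimately have c3: "P^4 dvd c3" using cop_cancel by blast
  have "P^4 dvd (- c1 + c2 - c3) + c3" using d1 c3 by (rule dvd_add)
  hence c21: "P^4 dvd c2 - c1" by simp
  have "P^2 dvd P^4" by (simp add: le_imp_power_dvd)
  hence "P^2 dvd c2 - c1" using c21 dvd_trans by blast
  hence "P^2 dvd c2 - (c2 - c1)" using c(2) by (rule dvd_diff[rotated])
  hence a2: "P^2 dvd c1" by simp
  show ?thesis
  proof (intro exI conjI allI)
    show "(int p)^2 dvd c1" using a2 P_def by simp
    fix t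
    have "P^4 dvd (c2-c1)*t^2 + c3*t^3" using c21 c3 by simp
    hence "[SS p 0 + c1*t + c2*t^2 + c3*t^3 = SS p 0 + c1*t*(t+1)] (mod P^4)"
      by (simp add: cong_iff_dvd_diff algebra_simps power2_eq_square)
    thus "[SS p t = SS p 0 + c1*t*(t+1)] (mod (int p)^4)"
      using cS[of t] cong_trans unfolding P_def by blast
  qed
qed



definition sig :: "nat \<Rightarrow> int" where "sig k = (int k - 1) * int k * (int k + 1)"

lemma dvd_sq4: "(P::int)^2 dvd a \<Longrightarrow> P^4 dvd a^2 * x"
proof -
  assume "P^2 dvd a"
  hence "(P^2)^2 dvd a^2" by (rule dvd_power_same)
  thus ?thesis by (simp add: power_mult[symmetric] dvd_mult2)
qed

lemma TT_cong:
  fixes a :: int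
  assumes a2: "(int p)^2 dvd a" and aS: "\<And>t. [SS p t = SS p 0 + a*t*(t+1)] (mod (int p)^4)"
  shows "[3 * SS p 0 * TT p n = SS p 0 ^ n * (3 * SS p 0 + a * sig n)] (mod (int p)^4)"
proof (induction n)
  case 0 show ?case by (simp add: TT_def sig_def)
next
  case (Suc n)
  define W where "W = SS p 0"
  have IH: "[3 * W * TT p n = W ^ n * (3 * W + a * sig n)] (mod (int p)^4)" using Suc W_def by simp
  have "3 * W * TT p (Suc n) = (3 * W * TT p n) * SS p (int n)" by (simp add: TT_def)
  also have "[\<dots> = (W ^ n * (3 * W + a * sig n)) * (W + a * int n * (int n + 1))] (mod (int p)^4)"
    using IH aS[of "int n"] unfolding W_def by (rule cong_mult)
  also have "(W ^ n * (3 * W + a * sig n)) * (W + a * int n * (int n + 1))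
     = W ^ Suc n * (3 * W + a * sig (Suc n)) + a^2 * (W^n * sig n * int n * (int n + 1))"
    by (simp add: sig_def algebra_simps power2_eq_square)
  also have "[\<dots> = W ^ Suc n * (3 * W + a * sig (Suc n))] (mod (int p)^4)"
    using dvd_sq4[OF a2] by (simp add: cong_iff_dvd_diff)
  finally show ?case unfolding W_def .
qed

lemma rel_R:
  fixes a :: int
  assumes p: "prime p" "p \<ge> 5" and a2: "(int p)^2 dvd a"
    and aS: "\<And>t. [SS p t = SS p 0 + a*t*(t+1)] (mod (int p)^4)" and mn: "m \<le> n"
  shows "[int ((n*p) choose (m*p)) * (3 * SS p 0 + a * (sig m + sig (n-m)))
          = int (n choose m) * (3 * SS p 0 + a * sig n)] (mod (int p)^4)"
proof -
  define W where "W = SS p 0"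
  define B where "B = int ((n*p) choose (m*p))"
  define C where "C = int (n choose m)"
  define M where "M = (int p)^4"
  have p1: "p \<ge> 1" using p by simp
  have E: "B * TT p m * TT p (n-m) = C * TT p n"
    using binom_TT[OF p1 mn] unfolding B_def C_def .
  have tc: "\<And>k. [3 * W * TT p k = W ^ k * (3 * W + a * sig k)] (mod M)"
    using TT_cong[OF a2 aS] unfolding W_def M_def .
  have h1: "[B * (3 * W * TT p m) * (3 * W * TT p (n-m)) = B * (W ^ m * (3 * W + a * sig m)) * (W ^ (n-m) * (3 * W + a * sig (n-m)))] (mod M)"
    by (intro cong_mult cong_refl tc)
  have h2: "B * (3 * W * TT p m) * (3 * W * TT p (n-m)) = 3 * W * C * (3 * W * TT p n)"
    using E by (simp add: algebra_simps)
  have h3: "[3 * W * C * (3 * W * TT p n) = 3 * W * C * (W ^ n * (3 * W + a * sig n))] (mod M)"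
    by (intro cong_mult cong_refl tc)
  have h3': "[B * (3 * W * TT p m) * (3 * W * TT p (n-m)) = 3 * W * C * (W ^ n * (3 * W + a * sig n))] (mod M)"
    unfolding h2 by (rule h3)
  have c1: "[B * (W ^ m * (3 * W + a * sig m)) * (W ^ (n-m) * (3 * W + a * sig (n-m)))
      = 3 * W * C * (W ^ n * (3 * W + a * sig n))] (mod M)"
    by (rule cong_trans[OF cong_sym[OF h1] h3'])
  have wn: "W ^ n = W ^ m * W ^ (n-m)" using mn by (simp add: power_add[symmetric])
  have "B * (W ^ m * (3 * W + a * sig m)) * (W ^ (n-m) * (3 * W + a * sig (n-m)))
     = (3 * W ^ Suc n) * (B * (3 * W + a * (sig m + sig (n-m)))) + a^2 * (B * W^n * sig m * sig (n-m))"
    unfolding power_Suc wn by (simp add: algebra_simps power2_eq_square)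
  moreover have "M dvd a^2 * (B * W^n * sig m * sig (n-m))" using dvd_sq4[OF a2] M_def by simp
  ultimately have c2: "[B * (W ^ m * (3 * W + a * sig m)) * (W ^ (n-m) * (3 * W + a * sig (n-m)))
      = (3 * W ^ Suc n) * (B * (3 * W + a * (sig m + sig (n-m))))] (mod M)"
    by (simp add: cong_iff_dvd_diff)
  have "[(3 * W ^ Suc n) * (B * (3 * W + a * (sig m + sig (n-m)))) = (3 * W ^ Suc n) * (C * (3 * W + a * sig n))] (mod M)"
  proof -
    have eqR: "3 * W * C * (W ^ n * (3 * W + a * sig n)) = (3 * W ^ Suc n) * (C * (3 * W + a * sig n))"
      by (simp add: algebra_simps)
    show ?thesis using cong_trans[OF cong_sym[OF c2] c1[unfolded eqR]] .
  qed
  moreover have "coprime (3 * W ^ Suc n) M"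
  proof -
    have "coprime (int 3) (int p ^ 4)"
      by (rule cop_pow[OF p(1)], rule not_dvd_23[OF p, of _ 0 1]) simp
    moreover have "coprime W (int p ^ 4)" using W_coprime[OF p(1), of 4] W_def by simp
    ultimately show ?thesis unfolding M_def by simp
  qed
  ultimately have "[B * (3 * W + a * (sig m + sig (n-m))) = C * (3 * W + a * sig n)] (mod M)"
    using cong_mult_lcancel by blast
  thus ?thesis unfolding B_def C_def W_def M_def .
qed



lemma int_to_nat_cong: "[int x = int y] (mod (int p)^k) \<Longrightarrow> [x = y] (mod p^k)"
  by (simp only: cong_int_iff[symmetric] of_nat_power)

lemma cong_nat_to_int: "[a = b] (mod m) \<Longrightarrow> [int a = int b] (mod int m)" for a b m :: nat
  by (simp add: cong_int_iff)

lemma i_imp_ii: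
  assumes p: "prime p" "p \<ge> 5" and w: "[(2 * p) choose p = 2] (mod p ^ 4)"
  shows "[(n * p) choose (m * p) = n choose m] (mod p ^ 4)"
proof (cases "m \<le> n")
  case False
  hence "n * p < m * p" using p by simp
  thus ?thesis using False by (simp add: binomial_eq_0)
next
  case mn: True
  obtain a where a2: "(int p)^2 dvd a" and aS: "\<And>t. [SS p t = SS p 0 + a*t*(t+1)] (mod (int p)^4)"
    using key_S[OF p] by blast
  define W where "W = SS p 0"
  define M where "M = (int p)^4"
  have cop3W: "coprime (3 * W) M"
  proof -
    have "coprime (int 3) (int p ^ 4)"
      by (rule cop_pow[OF p(1)], rule not_dvd_23[OF p, of _ 0 1]) simp
    moreover have "coprime W (int p ^ 4)" using W_coprime[OF p(1), of 4] W_def by simp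
    ultimately show ?thesis unfolding M_def by simp
  qed
  have r21: "[int ((2*p) choose p) * (3 * W) = 2 * (3 * W + a * 6)] (mod M)"
    using rel_R[OF p a2 aS, of 1 2] unfolding W_def M_def by (simp add: sig_def)
  have "[int ((2*p) choose p) = 2] (mod M)"
    using cong_nat_to_int[OF w] unfolding M_def by simp
  hence "[int ((2*p) choose p) * (3 * W) = 2 * (3 * W)] (mod M)" by (rule cong_mult) (rule cong_refl)
  hence "[2 * (3 * W) = 2 * (3 * W + a * 6)] (mod M)" using r21 by (rule cong_trans[OF cong_sym])
  hence "M dvd 12 * a" by (simp add: cong_iff_dvd_diff algebra_simps)
  moreover have "coprime (12::int) M"
  proof -
    have "coprime (int 12) (int p ^ 4)"
      by (rule cop_pow[OF p(1)], rule not_dvd_23[OF p, of _ 2 1]) simp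
    thus ?thesis unfolding M_def by simp
  qed
  ultimately have Ma: "M dvd a" using cop_cancel by blast
  have r: "[int ((n*p) choose (m*p)) * (3 * W + a * (sig m + sig (n-m)))
          = int (n choose m) * (3 * W + a * sig n)] (mod M)"
    using rel_R[OF p a2 aS mn] unfolding W_def M_def .
  have z1: "[int ((n*p) choose (m*p)) * (3 * W + a * (sig m + sig (n-m))) = int ((n*p) choose (m*p)) * (3 * W)] (mod M)"
    using Ma by (simp add: cong_iff_dvd_diff algebra_simps)
  have z2: "[int (n choose m) * (3 * W + a * sig n) = int (n choose m) * (3*W)] (mod M)"
    using Ma by (simp add: cong_iff_dvd_diff algebra_simps)
  have "[int ((n*p) choose (m*p)) * (3 * W) = int (n choose m) * (3 * W)] (mod M)"
    by (rule cong_trans[OF cong_trans[OF cong_sym[OF z1] r] z2])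
  hence "[int ((n*p) choose (m*p)) = int (n choose m)] (mod M)"
    by (rule cong_mult_rcancel[OF cop3W, THEN iffD1])
  thus ?thesis unfolding M_def by (rule int_to_nat_cong)
qed



lemma sig_dvd: "(P::int) dvd int k \<Longrightarrow> P dvd sig k"
  unfolding sig_def by (simp add: dvd_mult2 mult.assoc dvd_mult)

lemma dvd22: "(P::int)^2 dvd x \<Longrightarrow> P^2 dvd y \<Longrightarrow> P^4 dvd x*y"
proof -
  assume "P^2 dvd x" "P^2 dvd y"
  hence "P^2 * P^2 dvd x * y" by (rule mult_dvd_mono)
  moreover have "P^2 * P^2 = P^4" by (simp flip: power_add)
  ultimately show ?thesis by simp
qed

lemma chain_step:
  assumes p: "prime p" "p \<ge> 5" and mn: "m \<le> n"
    and d: "p^2 dvd m" "p^2 dvd n"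
  shows "[(n * p) choose (m * p) = n choose m] (mod p ^ 4)"
proof -
  obtain a where a2: "(int p)^2 dvd a" and aS: "\<And>t. [SS p t = SS p 0 + a*t*(t+1)] (mod (int p)^4)"
    using key_S[OF p] by blast
  define W where "W = SS p 0"
  define M where "M = (int p)^4"
  have cop3W: "coprime (3 * W) M"
  proof -
    have "coprime (int 3) (int p ^ 4)"
      by (rule cop_pow[OF p(1)], rule not_dvd_23[OF p, of _ 0 1]) simp
    moreover have "coprime W (int p ^ 4)" using W_coprime[OF p(1), of 4] W_def by simp
    ultimately show ?thesis unfolding M_def by simp
  qed
  have dnm: "p^2 dvd n - m" using d by (simp add: dvd_diff_nat)
  have sd: "(int p)^2 dvd sig k" if "p^2 dvd k" for k
    using that by (intro sig_dvd) (metis of_nat_dvd_iff of_nat_power)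
  have M1: "M dvd a * (sig m + sig (n-m))"
    unfolding M_def by (rule dvd22[OF a2 dvd_add[OF sd[OF d(1)] sd[OF dnm]]])
  have M2: "M dvd a * sig n"
    unfolding M_def by (rule dvd22[OF a2 sd[OF d(2)]])
  have r: "[int ((n*p) choose (m*p)) * (3 * W + a * (sig m + sig (n-m)))
          = int (n choose m) * (3 * W + a * sig n)] (mod M)"
    using rel_R[OF p a2 aS mn] unfolding W_def M_def .
  have z1: "[int ((n*p) choose (m*p)) * (3 * W + a * (sig m + sig (n-m))) = int ((n*p) choose (m*p)) * (3 * W)] (mod M)"
  proof -
    have eq: "int ((n*p) choose (m*p)) * (3 * W + a * (sig m + sig (n-m))) - int ((n*p) choose (m*p)) * (3 * W)
       = int ((n*p) choose (m*p)) * (a * (sig m + sig (n-m)))" by (simp add: algebra_simps)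
    show ?thesis unfolding cong_iff_dvd_diff eq by (rule dvd_mult[OF M1])
  qed
  have z2: "[int (n choose m) * (3 * W + a * sig n) = int (n choose m) * (3*W)] (mod M)"
  proof -
    have eq: "int (n choose m) * (3 * W + a * sig n) - int (n choose m) * (3*W)
       = int (n choose m) * (a * sig n)" by (simp add: algebra_simps)
    show ?thesis unfolding cong_iff_dvd_diff eq by (rule dvd_mult[OF M2])
  qed
  have "[int ((n*p) choose (m*p)) * (3 * W) = int (n choose m) * (3 * W)] (mod M)"
    by (rule cong_trans[OF cong_trans[OF cong_sym[OF z1] r] z2])
  hence "[int ((n*p) choose (m*p)) = int (n choose m)] (mod M)"
    by (rule cong_mult_rcancel[OF cop3W, THEN iffD1])
  thus ?thesis unfolding M_def by (rule int_to_nat_cong)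
qed

lemma base_step:
  assumes p: "prime p" "p \<ge> 5"
  shows "[(2 * p ^ 2) choose (p ^ 2) = (2 * p) choose p] (mod p ^ 4)"
proof -
  obtain a where a2: "(int p)^2 dvd a" and aS: "\<And>t. [SS p t = SS p 0 + a*t*(t+1)] (mod (int p)^4)"
    using key_S[OF p] by blast
  define W where "W = SS p 0"
  define M where "M = (int p)^4"
  define P where "P = int p"
  define B2 where "B2 = int ((2 * p ^ 2) choose (p ^ 2))"
  define B1 where "B1 = int ((2 * p) choose p)"
  obtain a' where a': "a = P^2 * a'" using a2 P_def by (auto elim: dvdE)
  have r: "[B2 * (3 * W + a * (sig p + sig p)) = B1 * (3 * W + a * sig (2*p))] (mod M)"
  proof -
    have e: "(2*p)*p = 2*p^2" "p*p = p^2" "2*p - p = p" by (auto simp: power2_eq_square)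
    show ?thesis using rel_R[OF p a2 aS, of p "2*p"] unfolding e W_def M_def B1_def B2_def by simp
  qed
  have P2M: "P^2 dvd M" unfolding M_def P_def by (simp add: le_imp_power_dvd)
  have F: "[B2 * (3 * W + a * (sig p + sig p)) = B1 * (3 * W + a * sig (2*p))] (mod P^2)"
    using cong_dvd_modulus[OF r P2M] .
  have G: "[B2 * (3 * W + a * (sig p + sig p)) = (3 * W) * B2] (mod P^2)"
    using a' by (simp add: cong_iff_dvd_diff algebra_simps)
  have H: "[B1 * (3 * W + a * sig (2*p)) = (3 * W) * B1] (mod P^2)"
    using a' by (simp add: cong_iff_dvd_diff algebra_simps)
  have I: "[(3 * W) * B2 = (3 * W) * B1] (mod P^2)"
    by (rule cong_trans[OF cong_trans[OF cong_sym[OF G] F] H])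
  have cop: "coprime (3 * W) (P^k)" for k
  proof -
    have "coprime (int 3) (int p ^ k)"
      by (rule cop_pow[OF p(1)], rule not_dvd_23[OF p, of _ 0 1]) simp
    moreover have "coprime W (int p ^ k)" using W_coprime[OF p(1), of k] W_def by simp
    ultimately show ?thesis unfolding P_def by auto
  qed
  have "[B1 = B2] (mod P^2)" using cong_sym[OF cong_mult_lcancel[OF cop[of 2], THEN iffD1, OF I]] .
  then obtain \<beta> where beta: "B2 = B1 + P^2 * \<beta>" unfolding cong_iff_lin by blast
  have sp: "sig p = (P - 1) * P * (P + 1)" unfolding sig_def P_def by simp
  have s2p: "sig (2*p) = (2*P - 1) * (2*P) * (2*P + 1)" unfolding sig_def P_def by simp
  have "B2 * (3 * W + a * (sig p + sig p)) - B1 * (3 * W + a * sig (2*p))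
      = (3 * W) * (P^2 * \<beta>) + M * (a' * (2 * \<beta> * sig p - 6 * B1 * P))"
    unfolding beta a' sp s2p M_def P_def by (simp add: algebra_simps power2_eq_square power4_eq_xxxx)
  moreover have "M dvd B2 * (3 * W + a * (sig p + sig p)) - B1 * (3 * W + a * sig (2*p))"
    using r by (simp add: cong_iff_dvd_diff)
  ultimately have "M dvd ((3 * W) * (P^2 * \<beta>) + M * (a' * (2 * \<beta> * sig p - 6 * B1 * P))) - M * (a' * (2 * \<beta> * sig p - 6 * B1 * P))"
    by (intro dvd_diff dvd_triv_left) simp
  hence "M dvd (3 * W) * (P^2 * \<beta>)" by simp
  hence "M dvd P^2 * \<beta>" using cop[of 4] cop_cancel unfolding M_def P_def by blast
  hence "[B2 = B1] (mod M)" using beta by (simp add: cong_iff_dvd_diff)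
  thus ?thesis unfolding M_def B1_def B2_def by (rule int_to_nat_cong)
qed

lemma uncond:
  assumes p: "prime p" "p \<ge> 5"
  shows "[(2 * p ^ 4) choose (p ^ 4) = (2 * p) choose p] (mod p ^ 4)"
proof -
  have s3: "[((2 * p^3) * p) choose (p^3 * p) = (2 * p^3) choose (p^3)] (mod p ^ 4)"
    by (rule chain_step[OF p]) (auto simp: le_imp_power_dvd)
  have s2: "[((2 * p^2) * p) choose (p^2 * p) = (2 * p^2) choose (p^2)] (mod p ^ 4)"
    by (rule chain_step[OF p]) (auto simp: le_imp_power_dvd)
  have e4: "(2 * p^3) * p = 2 * p^4" "p^3 * p = p^4" "(2 * p^2) * p = 2 * p^3" "p^2 * p = p^3"
    by (simp_all add: power_Suc2[symmetric] mult.assoc del: power_Suc2)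
  show ?thesis using cong_trans[OF s3[unfolded e4] cong_trans[OF s2[unfolded e4] base_step[OF p]]] .
qed



lemma not_p_dvd_near:
  fixes p K k d :: nat
  assumes "prime p" "p dvd K" "k \<noteq> K" "k < K + p" "K < k + p"
  shows "\<not> p dvd k"
proof
  assume pk: "p dvd k"
  show False
  proof (cases "k > K")
    case True
    hence "p dvd k - K" using pk assms(2) by (simp add: dvd_diff_nat)
    moreover have "0 < k - K" "k - K < p" using True assms(4) by auto
    ultimately show False using dvd_imp_le by fastforce
  next
    case False
    hence kK: "k < K" using assms(3) by simp
    hence "p dvd K - k" using pk assms(2) by (simp add: dvd_diff_nat)
    moreover have "0 < K - k" "K - k < p" using kK assms(5) by auto
    ultimately show False using dvd_imp_le by fastforce
  qed
qed

lemma binom_p4_dvd: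
  fixes p N k :: nat
  assumes "prime p" "p^4 dvd N" "\<not> p dvd k"
  shows "p^4 dvd (N choose k)"
proof -
  have "k \<noteq> 0" using assms(3) by (metis dvd_0_right)
  then obtain j where k: "k = Suc j" by (cases k) auto
  have "k * (N choose k) = N * ((N-1) choose j)" unfolding k by (rule binomial_absorption)
  hence "p^4 dvd k * (N choose k)" using assms(2) by simp
  moreover have "coprime k (p^4)" using prime_imp_power_coprime_nat[OF assms(1,3)] .
  ultimately show ?thesis using coprime_dvd_mult_right_iff[of "p^4" k "N choose k"] coprime_commute by blast
qed

lemma lucas4:
  assumes p: "prime p" "p \<ge> 5"
    and ii: "\<forall>n m :: nat. [(n * p) choose (m * p) = n choose m] (mod p ^ 4)"
    and n0: "n0 < p" and m0: "m0 < p"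
  shows "[(n * p ^ 4 + n0) choose (m * p ^ 4 + m0) = (n choose m) * (n0 choose m0)] (mod p ^ 4)"
proof -
  have e: "n * p^4 = ((n*p^3)*p)" "m * p^4 = ((m*p^3)*p)" "n * p^3 = ((n*p^2)*p)" "m * p^3 = ((m*p^2)*p)"
     "n * p^2 = ((n*p)*p)" "m * p^2 = ((m*p)*p)"
    by (simp_all add: power_Suc2[symmetric] mult.assoc power2_eq_square power3_eq_cube power4_eq_xxxx del: power_Suc2)
  have big: "[(n * p^4) choose (m * p^4) = n choose m] (mod p ^ 4)"
    using cong_trans[OF ii[rule_format, of "n*p^3" "m*p^3", folded e(1,2)]
      cong_trans[OF ii[rule_format, of "n*p^2" "m*p^2", folded e(3,4)]
      cong_trans[OF ii[rule_format, of "n*p" "m*p", folded e(5,6)] ii[rule_format, of n m]]]] .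
  define N where "N = n * p^4"
  define K where "K = m * p^4"
  define r where "r = K + m0"
  define f where "f k = (N choose k) * (n0 choose (r - k))" for k
  have V: "(N + n0) choose r = (\<Sum>k\<le>r. f k)" unfolding f_def using vandermonde[of N n0 r] by simp
  have Kr: "K \<in> {..r}" unfolding r_def by simp
  have split: "(\<Sum>k\<le>r. f k) = f K + (\<Sum>k\<in>{..r} - {K}. f k)"
    using sum.remove[OF _ Kr, of f] by simp
  have pK: "p dvd K" unfolding K_def using p by simp
  have pN: "p^4 dvd N" unfolding N_def by simp
  have rest: "p^4 dvd f k" if k: "k \<in> {..r} - {K}" for k
  proof (cases "r - k \<le> n0")
    case False
    thus ?thesis unfolding f_def by (simp add: binomial_eq_0)
  next
    case True
    have "\<not> p dvd k"
      by (rule not_p_dvd_near[OF p(1) pK]) (use k True n0 m0 r_def in auto)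
    hence "p^4 dvd (N choose k)" using binom_p4_dvd[OF p(1) pN] by blast
    thus ?thesis unfolding f_def by simp
  qed
  have "p^4 dvd (\<Sum>k\<in>{..r} - {K}. f k)" using rest by (intro dvd_sum) auto
  hence "[(\<Sum>k\<in>{..r} - {K}. f k) = 0] (mod p^4)" by (simp add: cong_0_iff)
  hence "[f K + (\<Sum>k\<in>{..r} - {K}. f k) = f K + 0] (mod p^4)" by (intro cong_add cong_refl)
  hence "[(N + n0) choose r = f K] (mod p^4)" unfolding V split by simp
  moreover have "f K = (N choose K) * (n0 choose m0)" unfolding f_def r_def by simp
  ultimately have c1: "[(N + n0) choose r = (N choose K) * (n0 choose m0)] (mod p^4)" by simp
  have "[(N choose K) * (n0 choose m0) = (n choose m) * (n0 choose m0)] (mod p^4)"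
    using big unfolding N_def K_def by (intro cong_mult cong_refl)
  with c1 show ?thesis unfolding N_def K_def r_def by (rule cong_trans)
qed

theorem mainTheorem3:
  fixes p :: nat
  assumes "prime p" and "p \<ge> 5"
  shows "([(2 * p) choose p = 2] (mod p ^ 4)
           \<longleftrightarrow> (\<forall>n m :: nat. [(n * p) choose (m * p) = n choose m] (mod p ^ 4)))
       \<and> ([(2 * p) choose p = 2] (mod p ^ 4)
           \<longleftrightarrow> (\<forall>n m n0 m0 :: nat. n0 < p \<longrightarrow> m0 < p \<longrightarrow>
                 [(n * p ^ 4 + n0) choose (m * p ^ 4 + m0) = (n choose m) * (n0 choose m0)] (mod p ^ 4)))"
proof -
  have A: "[(2 * p) choose p = 2] (mod p ^ 4) \<Longrightarrow> (\<forall>n m :: nat. [(n * p) choose (m * p) = n choose m] (mod p ^ 4))"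
    using i_imp_ii[OF assms] by blast
  have B: "(\<forall>n m :: nat. [(n * p) choose (m * p) = n choose m] (mod p ^ 4)) \<Longrightarrow> [(2 * p) choose p = 2] (mod p ^ 4)"
  proof -
    assume "\<forall>n m :: nat. [(n * p) choose (m * p) = n choose m] (mod p ^ 4)"
    hence "[(2 * p) choose (1 * p) = 2 choose 1] (mod p ^ 4)" by blast
    thus ?thesis by simp
  qed
  have C: "(\<forall>n m n0 m0 :: nat. n0 < p \<longrightarrow> m0 < p \<longrightarrow>
                 [(n * p ^ 4 + n0) choose (m * p ^ 4 + m0) = (n choose m) * (n0 choose m0)] (mod p ^ 4))
        \<Longrightarrow> [(2 * p) choose p = 2] (mod p ^ 4)"
  proof -
    assume h: "\<forall>n m n0 m0 :: nat. n0 < p \<longrightarrow> m0 < p \<longrightarrow>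
                 [(n * p ^ 4 + n0) choose (m * p ^ 4 + m0) = (n choose m) * (n0 choose m0)] (mod p ^ 4)"
    have "0 < p" using assms by simp
    hence "[(2 * p ^ 4 + 0) choose (1 * p ^ 4 + 0) = (2 choose 1) * (0 choose 0)] (mod p ^ 4)"
      using h by blast
    hence "[(2 * p ^ 4) choose (p ^ 4) = 2] (mod p ^ 4)" by simp
    thus ?thesis using cong_trans[OF cong_sym[OF uncond[OF assms]]] by blast
  qed
  show ?thesis using A B C lucas4[OF assms] by blast
qed


end
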